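(* Consider the flat-pricing market described in the context, and assume the network cost coefficient satisfies $\eta<\big(\kappa_{\mathrm{avg}}\,\Phi_{\max}^{1-\theta}\big)^{-1}$. Then: (i) $R(p)$ is unimodal on $[0,p_{\max})$ (i.e., there is $v$ such that $R$ is monotonically increasing for $p\le v$ and monotonically decreasing for $p\ge v$), and the feasible price set $\mathcal P$ is non-empty and connected. (ii) If $R'(p_0)<0$, then the network is opt-saturated and the unique equilibrium price is $p^\star=p_0$, where $$p_0=\Phi_{\max}^{\theta}\left(1-\frac{C_{3g}}{\kappa_{\mathrm{peak}}\,\hat N\,\mathbb E[\Phi]}\right)^{\frac{\theta}{2-\sigma}},\qquad \mathbb E[\Phi]=\tfrac{1-\sigma}{2-\sigma}\Phi_{\max}.$$ (iii) If $R'(p_0)>0$, then the network is opt-unsaturated and the unique equilibrium price $p^\star=p^\star(\kappa_{\mathrm{avg}})$ is the unique solution of $R'(p)=0$ in $(0,p_{\max})$; moreover, viewing $\kappa_{\mathrm{avg}}$ as a variable, $\frac{\partial p^\star(\kappa_{\mathrm{avg}})}{\partial \kappa_{\mathrm{avg}}}>0$.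
   Context: Market model (single cell). There are $\hat N$ users (treated as a continuum of mass $\hat N$) in one base-station cell with capacity $C_{3g}>0$ (traffic volume per time slot), and time slots $t\in T=\{1,\dots,|T|\}$. Each user's daily traffic demand $\Phi$ is random with density $f_\Phi(x)=x^{-\sigma}/Z$ for $0\le x\le\Phi_{\max}$, where $0<\sigma<1$ and $Z=\Phi_{\max}^{1-\sigma}/(1-\sigma)$. All users share a temporal preference $w(t)\ge 0$ with $\sum_{t\in T}w(t)=1$; a user with demand $\Phi$ has per-slot demand $\phi(t)=w(t)\Phi$. The willingness to pay is $\gamma(t)=w(t)^{1-\theta}$ with price sensitivity $\theta\in(0,1)$; a user sending volumes $x(t)\le\phi(t)$ and paying $m$ gets net-utility $\sum_{t}\gamma(t)x(t)^\theta-m$. Offloading indicators: constants $\kappa_{\mathrm{avg}},\kappa_{\mathrm{peak}}\in(0,1]$ (independent of price) such that, if $X_{\rm tot}=\sum_t X(t)$ is the total (cellular+WiFi) traffic sent in the cell in a day, then the total daily cellular (3G) traffic is $\kappa_{\mathrm{avg}}X_{\rm tot}$ and the peak per-slot cellular traffic is $\kappa_{\mathrm{peak}}X_{\rm tot}$. Flat pricing with fee $p\ge0$: a user subscribes iff its net-utility $\Phi^\theta-p$ is positive, i.e. iff $\Phi>p^{1/\theta}$, and a subscriber sends its whole demand, $x(t)=\phi(t)$. Let $p_{\max}=\Phi_{\max}^\theta$ (no subscribers for $p\ge p_{\max}$). The provider's revenue (income minus linear cellular cost with coefficient $\eta>0$ per unit of cellular traffic) is, for $0\le p<p_{\max}$,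 $$R(p)=\hat N\int_{p^{1/\theta}}^{\Phi_{\max}}\big(p-\eta\kappa_{\mathrm{avg}}\Phi\big)f_\Phi(\Phi)\,d\Phi,$$ and $R(p)=0$ for $p\ge p_{\max}$. The peak cellular traffic is $A(p)=\kappa_{\mathrm{peak}}\hat N\int_{p^{1/\theta}}^{\Phi_{\max}}\Phi f_\Phi(\Phi)\,d\Phi$. Feasible price set: $\mathcal P=\{p: R(p)>0,\ A(p)\le C_{3g}\}$; threshold price $p_0=\inf\mathcal P$. An equilibrium price is any $p^\star\in\arg\max_{p\in\mathcal P}R(p)$. The network is saturated at $p$ if $A(p)=C_{3g}$; for a unique equilibrium price $p^\star$, the network is called opt-saturated if it is saturated at $p^\star$ and opt-unsaturated otherwise. *)

theory Defs
  imports "HOL-Analysis.Analysis"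
begin

text \<open>Single-cell flat-pricing market. Parameters:
  N = user mass, C = cellular capacity C_3g, Pm = Phi_max, sg = sigma,
  th = theta, eta = cost coefficient, ka = kappa_avg, kp = kappa_peak.\<close>

definition Zc :: "real \<Rightarrow> real \<Rightarrow> real" where
  "Zc sg Pm = Pm powr (1 - sg) / (1 - sg)"

definition fPhi :: "real \<Rightarrow> real \<Rightarrow> real \<Rightarrow> real" where
  "fPhi sg Pm x = (if 0 \<le> x \<and> x \<le> Pm then x powr (- sg) / Zc sg Pm else 0)"

definition pmax :: "real \<Rightarrow> real \<Rightarrow> real" where
  "pmax th Pm = Pm powr th"

text \<open>Revenue R(p): the integral formula on [0, p_max), zero for p >= p_max
  (prices are nonnegative; the value for p < 0 is irrelevant and set to 0).\<close>
definition Rev :: "real \<Rightarrow> real \<Rightarrow> real \<Rightarrow> real \<Rightarrow> real \<Rightarrow> real \<Rightarrow> real \<Rightarrow> real" where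
  "Rev N sg th Pm eta ka p =
     (if 0 \<le> p \<and> p < pmax th Pm
      then N * integral {p powr (1 / th)..Pm} (\<lambda>x. (p - eta * ka * x) * fPhi sg Pm x)
      else 0)"

definition Apeak :: "real \<Rightarrow> real \<Rightarrow> real \<Rightarrow> real \<Rightarrow> real \<Rightarrow> real \<Rightarrow> real" where
  "Apeak N sg th Pm kp p =
     (if 0 \<le> p then kp * N * integral {p powr (1 / th)..Pm} (\<lambda>x. x * fPhi sg Pm x) else 0)"

definition Feas :: "real \<Rightarrow> real \<Rightarrow> real \<Rightarrow> real \<Rightarrow> real \<Rightarrow> real \<Rightarrow> real \<Rightarrow> real \<Rightarrow> real set" where
  "Feas N C sg th Pm eta ka kp =
     {p. 0 \<le> p \<and> Rev N sg th Pm eta ka p > 0 \<and> Apeak N sg th Pm kp p \<le> C}"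

definition p0 :: "real \<Rightarrow> real \<Rightarrow> real \<Rightarrow> real \<Rightarrow> real \<Rightarrow> real \<Rightarrow> real \<Rightarrow> real \<Rightarrow> real" where
  "p0 N C sg th Pm eta ka kp = Inf (Feas N C sg th Pm eta ka kp)"

definition EqSet :: "real \<Rightarrow> real \<Rightarrow> real \<Rightarrow> real \<Rightarrow> real \<Rightarrow> real \<Rightarrow> real \<Rightarrow> real \<Rightarrow> real set" where
  "EqSet N C sg th Pm eta ka kp =
     {p \<in> Feas N C sg th Pm eta ka kp. \<forall>q \<in> Feas N C sg th Pm eta ka kp.
        Rev N sg th Pm eta ka q \<le> Rev N sg th Pm eta ka p}"

definition eq_price :: "real \<Rightarrow> real \<Rightarrow> real \<Rightarrow> real \<Rightarrow> real \<Rightarrow> real \<Rightarrow> real \<Rightarrow> real \<Rightarrow> real" where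
  "eq_price N C sg th Pm eta ka kp = (THE p. EqSet N C sg th Pm eta ka kp = {p})"

end

theory Submission
  imports Defs
begin

lemma tangent_powr:
  fixes rho w z :: real
  assumes "1 \<le> rho" "0 < w" "0 < z"
  shows "z powr rho - w powr rho \<ge> rho * w powr (rho - 1) * (z - w)"
proof -
  have "(rho * w powr (rho - 1)) * (z - w) \<le> z powr rho - w powr rho"
    using assms by (intro convex_on_imp_above_tangent[where A = "{0<..}"] powr_convex)
       (auto intro!: derivative_eq_intros simp: interior_open)
  thus ?thesis by simp
qed


lemma int_powr:
  fixes a b s :: real
  assumes "0 \<le> a" "a \<le> b" "0 < s + 1"
  shows "((\<lambda>x. x powr s) has_integral (b powr (s+1) - a powr (s+1)) / (s+1)) {a..b}"
proof -
  have "((\<lambda>x. x powr s) has_integral ((\<lambda>x. x powr (s+1) / (s+1)) b - (\<lambda>x. x powr (s+1) / (s+1)) a)) {a..b}"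
  proof (rule fundamental_theorem_of_calculus_interior[OF assms(2)])
    have "continuous_on {a..b} (\<lambda>x. x powr (s + 1))"
      using assms by (intro continuous_on_powr' continuous_on_id continuous_on_const) auto
    thus "continuous_on {a..b} (\<lambda>x. x powr (s + 1) / (s + 1))"
      using assms by (intro continuous_on_divide continuous_on_const) auto
    fix x assume x: "x \<in> {a<..<b}"
    hence "x > 0" using assms by auto
    hence "((\<lambda>x. x powr (s + 1) / (s + 1)) has_real_derivative x powr s) (at x)"
      using assms by (auto intro!: derivative_eq_intros)
    thus "((\<lambda>x. x powr (s + 1) / (s + 1)) has_vector_derivative x powr s) (at x)"
      by (simp add: has_real_derivative_iff_has_vector_derivative)
  qed
  thus ?thesis by (simp add: diff_divide_distrib)
qed

locale base =
  fixes N C Pm sg th eta kp :: real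
  assumes N_pos: "N > 0" and C_pos: "C > 0" and Pm_pos: "Pm > 0"
    and sg0: "0 < sg" and sg1: "sg < 1" and th0: "0 < th" and th1: "th < 1"
    and eta_pos: "eta > 0" and kp0: "0 < kp"
begin

definition "P = Pm powr th"
definition "al = (1-sg)/th"
definition "be = (2-sg)/th"
definition "ga = (1-th)/th"
definition "rho = (2-sg-th)/(1-th)"
definition "E = (1-sg)/(2-sg)*Pm"
definition "K1 = eta*(1-sg)*Pm powr (1-th)/th"
definition "M = kp*N*E"
definition "pc = (if C < M then P*(1-C/M) powr (1/be) else 0)"
definition "tt K w = w powr rho - (1+al)*w + K"
definition "wst K = (THE w. 1 < w \<and> tt K w = 0)"
definition "vv k = P * wst (k*K1) powr (-1/ga)"
definition "Rf k p = N * (p * (1 - (p/P) powr al) - eta*k*E*(1 - (p/P) powr be))"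
definition "Rd k p = N*(1 - (1+al)*(p/P) powr al + k*K1*(p/P) powr (be-1))"
definition "Af p = M*(1-(p/P) powr be)"
definition "r0 k = (SOME r. 0 < r \<and> r < vv k \<and> (\<forall>p. 0 \<le> p \<and> p < P \<longrightarrow> (Rf k p > 0 \<longleftrightarrow> r < p)))"

lemma P_pos: "P > 0" unfolding P_def using Pm_pos by simp
lemma al_pos: "al > 0" unfolding al_def using sg1 th0 by simp
lemma ga_pos: "ga > 0" unfolding ga_def using th1 th0 by simp
lemma rho_gt1: "rho > 1" unfolding rho_def using sg1 th1 by (simp add: field_simps)
lemma be_pos: "be > 1" unfolding be_def using sg1 th1 th0 by (simp add: field_simps)
lemma E_pos: "E > 0" unfolding E_def using sg1 Pm_pos by simp
lemma K1_pos: "K1 > 0" unfolding K1_def using sg1 Pm_pos th0 eta_pos by simp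
lemma M_pos: "M > 0" unfolding M_def using kp0 N_pos E_pos by simp

lemma tt_cont: "\<forall>x\<in>S. 0 < x \<Longrightarrow> continuous_on S (tt K)"
  unfolding tt_def using rho_gt1 by (intro continuous_intros) auto

lemma tt_deriv: "0 < w \<Longrightarrow> (tt K has_real_derivative (rho * w powr (rho - 1) - (1+al))) (at w)"
  unfolding tt_def by (auto intro!: derivative_eq_intros)

lemma tt_tangent:
  assumes "0 < w" "0 < z"
  shows "tt K z - tt K w \<ge> (rho * w powr (rho - 1) - (1+al)) * (z - w)"
  using tangent_powr[of rho w z] assms rho_gt1 unfolding tt_def by (simp add: algebra_simps)

lemma tt_1: "tt K 1 = K - al" unfolding tt_def by simp

lemma tt_root_props:
  assumes K: "K < al" and w1: "1 < w1" and r: "tt K w1 = 0"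
  shows "rho * w1 powr (rho - 1) > 1+al"
    and "\<And>w. w1 < w \<Longrightarrow> tt K w > 0"
    and "\<And>w. 1 \<le> w \<Longrightarrow> w < w1 \<Longrightarrow> tt K w < 0"
proof -
  have "tt K 1 - tt K w1 \<ge> (rho * w1 powr (rho - 1) - (1+al)) * (1 - w1)"
    using tt_tangent[of w1 1] w1 by simp
  hence a: "(rho * w1 powr (rho - 1) - (1+al)) * (w1 - 1) \<ge> al - K"
    using r tt_1[of K] by (simp add: algebra_simps)
  show d: "rho * w1 powr (rho - 1) > 1+al"
  proof (rule ccontr)
    assume "\<not> ?thesis"
    hence "(rho * w1 powr (rho - 1) - (1+al)) * (w1 - 1) \<le> 0"
      using w1 by (intro mult_nonpos_nonneg) auto
    thus False using a K by simp
  qed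
  show "tt K w > 0" if "w1 < w" for w
  proof -
    have "tt K w - tt K w1 \<ge> (rho * w1 powr (rho - 1) - (1+al)) * (w - w1)"
      using tt_tangent[of w1 w] w1 that by simp
    moreover have "(rho * w1 powr (rho - 1) - (1+al)) * (w - w1) > 0"
      using d that by simp
    ultimately show ?thesis using r by simp
  qed
  show "tt K w < 0" if "1 \<le> w" "w < w1" for w
  proof (cases "w = 1")
    case True thus ?thesis using tt_1[of K] K by simp
  next
    case False
    hence w: "1 < w" using that by simp
    show ?thesis
    proof (rule ccontr)
      assume "\<not> ?thesis"
      hence nn: "tt K w \<ge> 0" by simp
      have "tt K 1 - tt K w \<ge> (rho * w powr (rho - 1) - (1+al)) * (1 - w)"
        using tt_tangent[of w 1] w by simp
      hence "(rho * w powr (rho - 1) - (1+al)) * (w - 1) \<ge> tt K w - tt K 1"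
        by (simp add: algebra_simps)
      hence "(rho * w powr (rho - 1) - (1+al)) * (w - 1) > 0" using nn tt_1[of K] K by simp
      hence pos: "rho * w powr (rho - 1) - (1+al) > 0" using w
        by (simp add: zero_less_mult_iff)
      have "tt K w1 - tt K w \<ge> (rho * w powr (rho - 1) - (1+al)) * (w1 - w)"
        using tt_tangent[of w w1] w that by simp
      moreover have "(rho * w powr (rho - 1) - (1+al)) * (w1 - w) > 0" using pos that by simp
      ultimately show False using r nn by simp
    qed
  qed
qed

lemma tt_exists:
  assumes K: "K < al"
  shows "\<exists>w. 1 < w \<and> tt K w = 0"
proof -
  define W where "W = (2 + al + \<bar>K\<bar>) powr (1/(rho-1))"
  have W1: "W \<ge> 1" unfolding W_def using rho_gt1 al_pos by (intro ge_one_powr_ge_zero) auto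
  have "W powr (rho - 1) = 2 + al + \<bar>K\<bar>"
    unfolding W_def using rho_gt1 al_pos by (simp add: powr_powr)
  moreover have "W powr rho = W powr (rho - 1) * W powr 1"
    using powr_add[of W "rho - 1" 1] by simp
  ultimately have "W powr rho = W * (2 + al + \<bar>K\<bar>)"
    using W1 by simp
  hence "tt K W = W * (1 + \<bar>K\<bar>) + K" unfolding tt_def by (simp add: algebra_simps)
  moreover have "W * (1 + \<bar>K\<bar>) \<ge> 1 * (1 + \<bar>K\<bar>)" using W1 by (intro mult_right_mono) auto
  ultimately have "tt K W \<ge> 1 + \<bar>K\<bar> + K" by simp
  hence tW: "tt K W > 0" using abs_ge_minus_self[of K] by linarith
  have "tt K 1 < 0" using tt_1 K by simp
  then obtain x where x: "1 \<le> x" "x \<le> W" "tt K x = 0"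
    using IVT'[of "tt K" 1 0 W] tW W1 tt_cont[of "{1..W}" K] by force
  moreover have "x \<noteq> 1" using x \<open>tt K 1 < 0\<close> by auto
  ultimately show ?thesis by force
qed

lemma wst:
  assumes K: "K < al"
  shows "1 < wst K" "tt K (wst K) = 0"
    "\<And>w. wst K < w \<Longrightarrow> tt K w > 0"
    "\<And>w. 1 \<le> w \<Longrightarrow> w < wst K \<Longrightarrow> tt K w < 0"
    "rho * wst K powr (rho - 1) > 1+al"
    "\<And>w. 1 < w \<Longrightarrow> tt K w = 0 \<Longrightarrow> wst K = w"
proof -
  obtain w1 where w1: "1 < w1" "tt K w1 = 0" using tt_exists[OF K] by blast
  have uniq: "w = w1" if "1 < w" "tt K w = 0" for w
  proof (rule ccontr)
    assume "w \<noteq> w1"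
    then consider "w < w1" | "w1 < w" by linarith
    then show False
    proof cases
      case 1 thus False using tt_root_props(3)[OF K w1, of w] that by simp
    next
      case 2 thus False using tt_root_props(2)[OF K w1, of w] that by simp
    qed
  qed
  have e: "wst K = w1" unfolding wst_def
    by (rule the_equality) (use w1 uniq in blast)+
  show "1 < wst K" "tt K (wst K) = 0" using e w1 by auto
  show "\<And>w. wst K < w \<Longrightarrow> tt K w > 0" using e tt_root_props(2)[OF K w1] by simp
  show "\<And>w. 1 \<le> w \<Longrightarrow> w < wst K \<Longrightarrow> tt K w < 0" using e tt_root_props(3)[OF K w1] by simp
  show "rho * wst K powr (rho - 1) > 1+al" using e tt_root_props(1)[OF K w1] by simp
  show "\<And>w. 1 < w \<Longrightarrow> tt K w = 0 \<Longrightarrow> wst K = w" using e uniq by metis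
qed


lemma wst_deriv:
  assumes K: "K < al"
  shows "(wst has_real_derivative inverse (1 + al - rho * wst K powr (rho - 1))) (at K)"
proof -
  define phi where "phi w = (1+al)*w - w powr rho" for w
  define D where "D = 1 + al - rho * wst K powr (rho - 1)"
  have D: "D < 0" unfolding D_def using wst(5)[OF K] by simp
  define S where "S = {1<..} \<inter> phi -` {..<al}"
  have cphi: "continuous_on {1<..} phi" unfolding phi_def using rho_gt1 by (intro continuous_intros) auto
  have "\<forall>B. open B \<longrightarrow> open (phi -` B \<inter> {1<..})"
    using cphi continuous_on_open_vimage[of "{1<..}" phi] open_greaterThan by blast
  hence "open (phi -` {..<al} \<inter> {1<..})" using open_lessThan by blast
  hence oS: "open S" unfolding S_def by (simp add: Int_commute)
  have phiK: "phi (wst K) = K" using wst(2)[OF K] unfolding tt_def phi_def by simp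
  have xS: "wst K \<in> S" using wst(1)[OF K] K phiK by (simp add: S_def)
  have cS: "continuous_on S phi" by (rule continuous_on_subset[OF cphi]) (auto simp: S_def)
  have gf: "wst (phi z) = z" if "z \<in> S" for z
  proof -
    have "1 < z" "phi z < al" using that by (simp_all add: S_def)
    moreover have "tt (phi z) z = 0" unfolding tt_def phi_def by simp
    ultimately show ?thesis using wst(6) by blast
  qed
  have dphi: "(phi has_real_derivative D) (at (wst K))"
    unfolding phi_def D_def using wst(1)[OF K] by (auto intro!: derivative_eq_intros)
  have d1: "(phi has_derivative (*) D) (at (wst K))" using dphi by (simp add: has_field_derivative_def)
  have d2: "(*) D \<circ> (*) (inverse D) = id" using D by (auto simp: fun_eq_iff)
  have "(wst has_derivative (*) (inverse D)) (at (phi (wst K)))"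
    by (rule has_derivative_inverse_strong[OF oS xS cS gf d1 d2])
  thus ?thesis using phiK unfolding D_def by (simp add: has_field_derivative_def)
qed

lemma Pm_powr: "Pm powr s = P powr (s/th)"
  unfolding P_def using th0 by (simp add: powr_powr)

lemma conv_ratio:
  assumes "0 \<le> p"
  shows "(p powr (1/th)) powr s / Pm powr s = (p/P) powr (s/th)"
  using assms by (simp add: powr_powr Pm_powr powr_divide)

lemma Rev_closed:
  assumes "0 \<le> p" "p < P"
  shows "Rev N sg th Pm eta k p = N * (p * (1 - (p/P) powr al) - eta*k*E*(1 - (p/P) powr be))"
proof -
  define a where "a = p powr (1/th)"
  have a0: "0 \<le> a" unfolding a_def by simp
  have aPm: "a \<le> Pm"
  proof -
    have "a \<le> P powr (1/th)" unfolding a_def using assms th0 by (intro powr_mono2) auto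
    also have "\<dots> = Pm" unfolding P_def using th0 Pm_pos by (simp add: powr_powr)
    finally show ?thesis .
  qed
  define Z where "Z = Zc sg Pm"
  have Z: "Z = Pm powr (1-sg)/(1-sg)" unfolding Z_def Zc_def ..
  have Zpos: "Z > 0" unfolding Z using Pm_pos sg1 by simp
  have i1: "((\<lambda>x. x powr (-sg)) has_integral (Pm powr (1-sg) - a powr (1-sg)) / (1-sg)) {a..Pm}"
    using int_powr[OF a0 aPm, of "-sg"] sg1 by simp
  have i2: "((\<lambda>x. x powr (1-sg)) has_integral (Pm powr (2-sg) - a powr (2-sg)) / (2-sg)) {a..Pm}"
    using int_powr[OF a0 aPm, of "1-sg"] sg1 by (simp add: algebra_simps)
  have i: "((\<lambda>x. (p/Z) * x powr (-sg) - (eta*k/Z) * x powr (1-sg)) has_integral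
      (p/Z) * ((Pm powr (1-sg) - a powr (1-sg)) / (1-sg)) - (eta*k/Z) * ((Pm powr (2-sg) - a powr (2-sg)) / (2-sg))) {a..Pm}"
    by (intro has_integral_diff has_integral_mult_right i1 i2)
  have eqf: "(p/Z) * x powr (-sg) - (eta*k/Z) * x powr (1-sg) = (p - eta * k * x) * fPhi sg Pm x"
    if "x \<in> {a..Pm}" for x
  proof -
    have x0: "0 \<le> x" "x \<le> Pm" using that a0 by auto
    have "x powr (1-sg) = x * x powr (-sg)"
    proof (cases "x = 0")
      case False thus ?thesis using x0 powr_add[of x 1 "-sg"] by simp
    qed simp
    thus ?thesis unfolding fPhi_def Z_def[symmetric] using x0 by (simp add: algebra_simps)
  qed
  have "integral {a..Pm} (\<lambda>x. (p - eta * k * x) * fPhi sg Pm x) =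
      (p/Z) * ((Pm powr (1-sg) - a powr (1-sg)) / (1-sg)) - (eta*k/Z) * ((Pm powr (2-sg) - a powr (2-sg)) / (2-sg))"
    using has_integral_eq[OF eqf i] by (rule integral_unique)
  also have "\<dots> = p * (1 - (p/P) powr al) - eta*k*E*(1 - (p/P) powr be)"
  proof -
    have r1: "a powr (1-sg) / Pm powr (1-sg) = (p/P) powr al"
      unfolding a_def al_def using conv_ratio[OF assms(1)] by simp
    have r2: "a powr (2-sg) / Pm powr (2-sg) = (p/P) powr be"
      unfolding a_def be_def using conv_ratio[OF assms(1)] by simp
    have pm: "Pm powr (2-sg) = Pm * Pm powr (1-sg)"
      using powr_add[of Pm 1 "1-sg"] Pm_pos by simp
    have "(p/Z) * ((Pm powr (1-sg) - a powr (1-sg)) / (1-sg)) = p * (1 - a powr (1-sg) / Pm powr (1-sg))"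
      unfolding Z using Pm_pos sg1 by (simp add: field_simps)
    moreover have "(eta*k/Z) * ((Pm powr (2-sg) - a powr (2-sg)) / (2-sg)) = eta*k*E*(1 - a powr (2-sg) / Pm powr (2-sg))"
      unfolding Z E_def pm using Pm_pos sg1 by (simp add: field_simps)
    ultimately show ?thesis using r1 r2 by simp
  qed
  finally show ?thesis unfolding Rev_def a_def pmax_def P_def[symmetric] using assms by simp
qed

lemma Apeak_closed:
  assumes "0 \<le> p" "p \<le> P"
  shows "Apeak N sg th Pm kp p = Af p"
proof -
  define a where "a = p powr (1/th)"
  have a0: "0 \<le> a" unfolding a_def by simp
  have aPm: "a \<le> Pm"
  proof -
    have "a \<le> P powr (1/th)" unfolding a_def using assms th0 by (intro powr_mono2) auto
    also have "\<dots> = Pm" unfolding P_def using th0 Pm_pos by (simp add: powr_powr)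
    finally show ?thesis .
  qed
  define Z where "Z = Zc sg Pm"
  have Z: "Z = Pm powr (1-sg)/(1-sg)" unfolding Z_def Zc_def ..
  have i2: "((\<lambda>x. x powr (1-sg)) has_integral (Pm powr (2-sg) - a powr (2-sg)) / (2-sg)) {a..Pm}"
    using int_powr[OF a0 aPm, of "1-sg"] sg1 by (simp add: algebra_simps)
  have i: "((\<lambda>x. (1/Z) * x powr (1-sg)) has_integral (1/Z) * ((Pm powr (2-sg) - a powr (2-sg)) / (2-sg))) {a..Pm}"
    by (intro has_integral_mult_right i2)
  have eqf: "(1/Z) * x powr (1-sg) = x * fPhi sg Pm x" if "x \<in> {a..Pm}" for x
  proof -
    have x0: "0 \<le> x" "x \<le> Pm" using that a0 by auto
    have "x powr (1-sg) = x * x powr (-sg)"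
    proof (cases "x = 0")
      case False thus ?thesis using x0 powr_add[of x 1 "-sg"] by simp
    qed simp
    thus ?thesis unfolding fPhi_def Z_def[symmetric] using x0 by (simp add: algebra_simps)
  qed
  have "integral {a..Pm} (\<lambda>x. x * fPhi sg Pm x) = (1/Z) * ((Pm powr (2-sg) - a powr (2-sg)) / (2-sg))"
    using has_integral_eq[OF eqf i] by (rule integral_unique)
  also have "\<dots> = E * (1 - (p/P) powr be)"
  proof -
    have r2: "a powr (2-sg) / Pm powr (2-sg) = (p/P) powr be"
      unfolding a_def be_def using conv_ratio[OF assms(1)] by simp
    have pm: "Pm powr (2-sg) = Pm * Pm powr (1-sg)"
      using powr_add[of Pm 1 "1-sg"] Pm_pos by simp
    have "(1/Z) * ((Pm powr (2-sg) - a powr (2-sg)) / (2-sg)) = E*(1 - a powr (2-sg) / Pm powr (2-sg))"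
      unfolding Z E_def pm using Pm_pos sg1 by (simp add: field_simps)
    thus ?thesis using r2 by simp
  qed
  finally show ?thesis unfolding Apeak_def Af_def M_def a_def using assms by simp
qed

lemma Apeak_big:
  assumes "P < p"
  shows "Apeak N sg th Pm kp p = 0"
proof -
  have "Pm < p powr (1/th)"
  proof -
    have "Pm = P powr (1/th)" unfolding P_def using th0 Pm_pos by (simp add: powr_powr)
    also have "\<dots> < p powr (1/th)" using assms P_pos th0 by (intro powr_less_mono2) auto
    finally show ?thesis .
  qed
  thus ?thesis unfolding Apeak_def using P_pos assms by simp
qed


lemma Rev_Rf: "0 \<le> p \<Longrightarrow> p < P \<Longrightarrow> Rev N sg th Pm eta k p = Rf k p"
  using Rev_closed unfolding Rf_def by simp

lemma Rev_out: "\<not> (0 \<le> p \<and> p < P) \<Longrightarrow> Rev N sg th Pm eta k p = 0"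
  unfolding Rev_def pmax_def P_def by auto

lemma EK1: "eta*k*E*be/P = k*K1"
proof -
  have a: "Pm / P = Pm powr (1-th)" unfolding P_def using Pm_pos by (simp add: powr_diff)
  have b: "E*be = (1-sg)*Pm/th" unfolding E_def be_def using sg1 th0 by (simp add: field_simps)
  have "eta*k*E*be/P = eta*k*(1-sg)/th * (Pm / P)" using b by (simp add: field_simps)
  thus ?thesis unfolding K1_def a by (simp add: field_simps)
qed

lemma Rf_deriv:
  assumes p: "0 < p"
  shows "(Rf k has_real_derivative Rd k p) (at p)"
proof -
  have q: "p/P > 0" using p P_pos by simp
  have h1: "p * (p/P) powr (al - 1) = P * (p/P) powr al"
  proof -
    have "(p/P) powr al = (p/P) powr 1 * (p/P) powr (al - 1)" using powr_add[of "p/P" 1 "al-1"] by simp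
    thus ?thesis using q P_pos by (simp add: field_simps)
  qed
  have h2: "p * (p/P) powr (be - 1) = P * (p/P) powr be"
  proof -
    have "(p/P) powr be = (p/P) powr 1 * (p/P) powr (be - 1)" using powr_add[of "p/P" 1 "be-1"] by simp
    thus ?thesis using q P_pos by (simp add: field_simps)
  qed
  have dq: "((\<lambda>p. p/P) has_real_derivative 1/P) (at p)" using DERIV_cdivide[OF DERIV_ident[of "at p"], of P] by simp
  have dA: "((\<lambda>p. (p/P) powr al) has_real_derivative al*(p/P) powr (al-1) * (1/P)) (at p)"
    using DERIV_chain2[OF has_real_derivative_powr[OF q] dq] .
  have dB: "((\<lambda>p. (p/P) powr be) has_real_derivative be*(p/P) powr (be-1) * (1/P)) (at p)"
    using DERIV_chain2[OF has_real_derivative_powr[OF q] dq] .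
  have d: "((\<lambda>p. N * (p * (1 - (p/P) powr al) - eta*k*E*(1 - (p/P) powr be))) has_real_derivative
     N * ((p * (0 - al*(p/P) powr (al-1) * (1/P)) + 1 * (1 - (p/P) powr al))
      - eta*k*E*(0 - be*(p/P) powr (be-1) * (1/P)))) (at p)"
    by (intro DERIV_cmult DERIV_diff DERIV_mult' DERIV_ident DERIV_const dA dB)
  have fe: "Rf k = (\<lambda>p. N * (p * (1 - (p/P) powr al) - eta*k*E*(1 - (p/P) powr be)))"
    by (rule ext) (simp add: Rf_def)
  have "(Rf k has_real_derivative
     N * ((1 - (p/P) powr al) + p * (- (al * (p/P) powr (al - 1) * (1/P)))
      - eta*k*E*(- (be * (p/P) powr (be - 1) * (1/P))))) (at p)"
    unfolding fe using d by (simp add: algebra_simps)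
  moreover have "N * ((1 - (p/P) powr al) + p * (- (al * (p/P) powr (al - 1) * (1/P)))
      - eta*k*E*(- (be * (p/P) powr (be - 1) * (1/P)))) = Rd k p"
  proof -
    have a: "p * (al * (p/P) powr (al - 1) * (1/P)) = al * (p/P) powr al"
      using h1 P_pos by (simp add: field_simps)
    have b0: "eta*k*E*(be * (p/P) powr (be - 1) * (1/P)) = (eta*k*E*be/P) * (p/P) powr (be - 1)"
      by simp
    have b: "eta*k*E*(be * (p/P) powr (be - 1) * (1/P)) = k*K1 * (p/P) powr (be - 1)"
      unfolding b0 EK1 ..
    show ?thesis unfolding Rd_def using a b by (simp add: algebra_simps)
  qed
  ultimately show ?thesis by simp
qed

lemma Rf_cont: "continuous_on {0..} (Rf k)"
proof -
  have c1: "continuous_on {0..} (\<lambda>p. (p/P) powr al)"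
    using P_pos al_pos by (intro continuous_on_powr' continuous_intros) auto
  have c2: "continuous_on {0..} (\<lambda>p. (p/P) powr be)"
    using P_pos be_pos by (intro continuous_on_powr' continuous_intros) auto
  show ?thesis unfolding Rf_def by (intro continuous_intros c1 c2)
qed

lemma Rf_0: "Rf k 0 = - N*eta*k*E" unfolding Rf_def by simp
lemma Rf_P: "Rf k P = 0" unfolding Rf_def using P_pos by simp

lemma powr_neg_less_iff:
  fixes x y c :: real
  assumes "0 < x" "0 < y" "0 < c"
  shows "x powr (-c) < y powr (-c) \<longleftrightarrow> y < x"
proof -
  have e: "x powr (-c) = 1 / x powr c" "y powr (-c) = 1 / y powr c" by (simp_all add: powr_minus_divide)
  show ?thesis
  proof
    assume "y < x"
    hence "y powr c < x powr c" using assms by (intro powr_less_mono2) auto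
    thus "x powr (-c) < y powr (-c)" unfolding e using assms by (simp add: divide_strict_left_mono)
  next
    assume h: "x powr (-c) < y powr (-c)"
    show "y < x"
    proof (rule ccontr)
      assume "\<not> y < x"
      hence "x powr c \<le> y powr c" using assms by (intro powr_mono2) auto
      hence "1 / y powr c \<le> 1 / x powr c" using assms by (simp add: divide_left_mono)
      thus False using h unfolding e by simp
    qed
  qed
qed

lemma vv_bounds:
  assumes "k*K1 < al"
  shows "0 < vv k" "vv k < P"
proof -
  have w: "1 < wst (k*K1)" using wst(1)[OF assms] .
  show "0 < vv k" unfolding vv_def using P_pos w by simp
  have "wst (k*K1) powr (-1/ga) < 1 powr (-1/ga)"
    using powr_neg_less_iff[of "wst (k*K1)" 1 "1/ga"] w ga_pos by simp
  thus "vv k < P" unfolding vv_def using P_pos by simp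
qed

lemma Rd_sign:
  assumes K: "k*K1 < al" and p: "0 < p" "p < P"
  shows "Rd k p > 0 \<longleftrightarrow> p < vv k" "Rd k p < 0 \<longleftrightarrow> vv k < p" "Rd k p = 0 \<longleftrightarrow> p = vv k"
proof -
  define q where "q = p/P"
  have q: "0 < q" "q < 1" unfolding q_def using p P_pos by auto
  define w where "w = q powr (-ga)"
  have w0: "0 < w" unfolding w_def using q by simp
  have w1: "1 < w"
    unfolding w_def using powr_neg_less_iff[of 1 q ga] q ga_pos by simp
  have qw: "q = w powr (-1/ga)" unfolding w_def using q ga_pos by (simp add: powr_powr)
  have e1: "al - ga*rho = -ga" unfolding al_def ga_def rho_def using th0 th1 by (simp add: field_simps)
  have e2: "be - 1 - ga*rho = 0" unfolding be_def ga_def rho_def using th0 th1 by (simp add: field_simps)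
  have wr: "w powr rho = q powr (-ga*rho)" unfolding w_def by (simp add: powr_powr)
  have i1: "q powr al * w powr rho = w"
  proof -
    have "q powr al * w powr rho = q powr (al + (-ga*rho))" by (simp only: wr powr_add)
    also have "al + (-ga*rho) = -ga" using e1 by simp
    finally show ?thesis unfolding w_def .
  qed
  have i2: "q powr (be-1) * w powr rho = 1"
  proof -
    have "q powr (be-1) * w powr rho = q powr ((be-1) + (-ga*rho))" by (simp only: wr powr_add)
    also have "(be-1) + (-ga*rho) = 0" using e2 by simp
    finally show ?thesis using q by simp
  qed
  have key: "Rd k p * w powr rho = N * tt (k*K1) w"
    unfolding Rd_def tt_def q_def[symmetric]
    using i1 i2 by (simp add: algebra_simps)
  have wrp: "w powr rho > 0" using w0 by simp
  have Rdeq: "Rd k p = N * tt (k*K1) w / w powr rho" using key wrp by (simp add: field_simps)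
  have sg1': "Rd k p > 0 \<longleftrightarrow> tt (k*K1) w > 0"
    unfolding Rdeq using wrp N_pos by (simp add: zero_less_divide_iff zero_less_mult_iff)
  have sg2': "Rd k p < 0 \<longleftrightarrow> tt (k*K1) w < 0"
    unfolding Rdeq using wrp N_pos by (simp add: divide_less_0_iff mult_less_0_iff)
  have ww: "w > wst (k*K1) \<longleftrightarrow> p < vv k"
  proof -
    have "p < vv k \<longleftrightarrow> q < wst (k*K1) powr (-1/ga)" unfolding vv_def q_def using P_pos by (simp add: field_simps)
    also have "\<dots> \<longleftrightarrow> w > wst (k*K1)" unfolding qw
      using powr_neg_less_iff[of w "wst (k*K1)" "1/ga"] w0 wst(1)[OF K] ga_pos by simp
    finally show ?thesis by simp
  qed
  have ww2: "w < wst (k*K1) \<longleftrightarrow> vv k < p"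
  proof -
    have "vv k < p \<longleftrightarrow> wst (k*K1) powr (-1/ga) < q" unfolding vv_def q_def using P_pos by (simp add: field_simps)
    also have "\<dots> \<longleftrightarrow> w < wst (k*K1)" unfolding qw
      using powr_neg_less_iff[of "wst (k*K1)" w "1/ga"] w0 wst(1)[OF K] ga_pos by simp
    finally show ?thesis by simp
  qed
  have cases3: "w < wst (k*K1) \<or> w = wst (k*K1) \<or> w > wst (k*K1)" by linarith
  have A1: "w > wst (k*K1) \<Longrightarrow> tt (k*K1) w > 0" using wst(3)[OF K] by simp
  have A2: "w < wst (k*K1) \<Longrightarrow> tt (k*K1) w < 0" using wst(4)[OF K, of w] w1 by simp
  have A3: "w = wst (k*K1) \<Longrightarrow> tt (k*K1) w = 0" using wst(2)[OF K] by simp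
  have t1: "tt (k*K1) w > 0 \<longleftrightarrow> w > wst (k*K1)"
    using cases3 A1 A2 A3 by auto
  have t2: "tt (k*K1) w < 0 \<longleftrightarrow> w < wst (k*K1)"
    using cases3 A1 A2 A3 by auto
  show a: "Rd k p > 0 \<longleftrightarrow> p < vv k" using sg1' t1 ww by simp
  show b: "Rd k p < 0 \<longleftrightarrow> vv k < p" using sg2' t2 ww2 by simp
  show "Rd k p = 0 \<longleftrightarrow> p = vv k" using a b by linarith
qed

lemma Rf_inc:
  assumes K: "k*K1 < al" and xy: "0 \<le> x" "x < y" "y \<le> vv k"
  shows "Rf k x < Rf k y"
proof (rule DERIV_pos_imp_increasing_open[OF xy(2)])
  fix z assume z: "x < z" "z < y"
  hence "0 < z" "z < P" "z < vv k" using xy vv_bounds[OF K] by auto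
  thus "\<exists>d. (Rf k has_real_derivative d) (at z) \<and> d > 0"
    using Rf_deriv[of z k] Rd_sign(1)[OF K, of z] by blast
next
  show "continuous_on {x..y} (Rf k)" by (rule continuous_on_subset[OF Rf_cont]) (use xy in auto)
qed

lemma Rf_dec:
  assumes K: "k*K1 < al" and xy: "vv k \<le> x" "x < y" "y \<le> P"
  shows "Rf k y < Rf k x"
proof (rule DERIV_neg_imp_decreasing_open[OF xy(2)])
  fix z assume z: "x < z" "z < y"
  hence "0 < z" "z < P" "vv k < z" using xy vv_bounds[OF K] by auto
  thus "\<exists>d. (Rf k has_real_derivative d) (at z) \<and> d < 0"
    using Rf_deriv[of z k] Rd_sign(2)[OF K, of z] by blast
next
  show "continuous_on {x..y} (Rf k)" by (rule continuous_on_subset[OF Rf_cont]) (use xy vv_bounds[OF K] in auto)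
qed


lemma powr_le_iff_base:
  fixes x y c :: real
  assumes "0 \<le> x" "0 \<le> y" "0 < c"
  shows "x powr c \<le> y powr c \<longleftrightarrow> x \<le> y"
proof
  assume "x \<le> y" thus "x powr c \<le> y powr c" using assms by (intro powr_mono2) auto
next
  assume h: "x powr c \<le> y powr c"
  show "x \<le> y"
  proof (rule ccontr)
    assume "\<not> x \<le> y"
    hence "y powr c < x powr c" using assms by (intro powr_less_mono2) auto
    thus False using h by simp
  qed
qed

lemma pc_lt_P: "pc < P"
proof (cases "C < M")
  case True
  have a: "0 < 1 - C/M" "1 - C/M < 1" using True C_pos M_pos by (auto simp: field_simps)
  have "(1 - C/M) powr (1/be) < 1 powr (1/be)" using a be_pos by (intro powr_less_mono2) auto
  thus ?thesis unfolding pc_def using True P_pos by simp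
next
  case False thus ?thesis unfolding pc_def using P_pos by simp
qed

lemma pc_ge0: "0 \<le> pc" unfolding pc_def using P_pos by simp

lemma Apeak_le_iff:
  assumes p: "0 \<le> p"
  shows "Apeak N sg th Pm kp p \<le> C \<longleftrightarrow> pc \<le> p"
proof (cases "p \<le> P")
  case pP: True
  have A: "Apeak N sg th Pm kp p = M*(1-(p/P) powr be)" using Apeak_closed[OF p pP] Af_def by simp
  show ?thesis
  proof (cases "C < M")
    case True
    define u where "u = (1 - C/M) powr (1/be)"
    have a: "0 < 1 - C/M" using True C_pos M_pos by (auto simp: field_simps)
    have ub: "u powr be = 1 - C/M" unfolding u_def using a be_pos by (simp add: powr_powr)
    have u0: "0 \<le> u" unfolding u_def by simp
    have pc: "pc = P * u" unfolding pc_def u_def using True by simp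
    have "Apeak N sg th Pm kp p \<le> C \<longleftrightarrow> 1 - C/M \<le> (p/P) powr be"
      unfolding A using M_pos by (simp add: field_simps)
    also have "\<dots> \<longleftrightarrow> u \<le> p/P" unfolding ub[symmetric]
      using powr_le_iff_base[of u "p/P" be] u0 p P_pos be_pos by simp
    also have "\<dots> \<longleftrightarrow> pc \<le> p" unfolding pc using P_pos by (simp add: field_simps)
    finally show ?thesis .
  next
    case False
    have "(p/P) powr be \<ge> 0" by simp
    hence "Apeak N sg th Pm kp p \<le> M" unfolding A using M_pos by (simp add: mult_left_le)
    thus ?thesis unfolding pc_def using False p by simp
  qed
next
  case False
  thus ?thesis using Apeak_big[of p] pc_lt_P C_pos by simp
qed

lemma Apeak_lt:
  assumes p: "0 \<le> p" "p \<le> P" and pc: "pc < p"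
  shows "Apeak N sg th Pm kp p < C"
proof -
  have A: "Apeak N sg th Pm kp p = M*(1-(p/P) powr be)" using Apeak_closed[OF p] Af_def by simp
  have p0: "0 < p" using pc pc_ge0 by simp
  show ?thesis
  proof (cases "C < M")
    case True
    define u where "u = (1 - C/M) powr (1/be)"
    have a: "0 < 1 - C/M" using True C_pos M_pos by (auto simp: field_simps)
    have ub: "u powr be = 1 - C/M" unfolding u_def using a be_pos by (simp add: powr_powr)
    have u0: "0 \<le> u" unfolding u_def by simp
    have pcu: "pc = P * u" unfolding pc_def u_def using True by simp
    have "u < p/P" using pc unfolding pcu using P_pos by (simp add: field_simps)
    hence "u powr be < (p/P) powr be" using u0 be_pos by (intro powr_less_mono2) auto
    hence "1 - C/M < (p/P) powr be" unfolding ub .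
    thus ?thesis unfolding A using M_pos by (simp add: field_simps)
  next
    case False
    have "(p/P) powr be > 0" using p0 P_pos by simp
    hence "M*(1-(p/P) powr be) < M" using M_pos by simp
    thus ?thesis unfolding A using False by simp
  qed
qed

lemma Apeak_pc:
  assumes "C < M"
  shows "Apeak N sg th Pm kp pc = C"
proof -
  have a: "0 < 1 - C/M" using assms C_pos M_pos by (auto simp: field_simps)
  have pc: "pc = P * (1 - C/M) powr (1/be)" unfolding pc_def using assms by simp
  have "Apeak N sg th Pm kp pc = M*(1-(pc/P) powr be)"
    using Apeak_closed[OF pc_ge0 less_imp_le[OF pc_lt_P]] Af_def by simp
  also have "(pc/P) powr be = 1 - C/M" unfolding pc using P_pos a be_pos by (simp add: powr_powr)
  finally show ?thesis using M_pos by simp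
qed

lemma Rev_deriv:
  assumes "0 < p" "p < P"
  shows "(Rev N sg th Pm eta k has_real_derivative Rd k p) (at p)"
  by (rule has_field_derivative_transform_within_open[OF Rf_deriv[of p k] open_greaterThanLessThan[of 0 P]])
     (use assms Rev_Rf in auto)

context
  fixes k assumes k0: "0 < k" and K: "k*K1 < al"
begin

lemma Rf_pos_iff: "\<exists>r. 0 < r \<and> r < vv k \<and> (\<forall>p. 0 \<le> p \<and> p < P \<longrightarrow> (Rf k p > 0 \<longleftrightarrow> r < p))"
proof -
  have v: "0 < vv k" "vv k < P" using vv_bounds[OF K] by auto
  have f0: "Rf k 0 < 0" unfolding Rf_0 using N_pos eta_pos k0 E_pos by simp
  have fv: "Rf k (vv k) > 0" using Rf_dec[OF K order_refl v(2) order_refl] Rf_P by simp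
  obtain r where r: "0 \<le> r" "r \<le> vv k" "Rf k r = 0"
    using IVT'[of "Rf k" 0 0 "vv k"] f0 fv v continuous_on_subset[OF Rf_cont[of k], of "{0..vv k}"] by force
  have r0: "r \<noteq> 0" using r f0 by auto
  have rv: "r \<noteq> vv k" using r fv by auto
  have "(Rf k p > 0 \<longleftrightarrow> r < p)" if p: "0 \<le> p" "p < P" for p
  proof (cases "p \<le> vv k")
    case True
    show ?thesis
    proof (cases "r < p")
      case True
      thus ?thesis using Rf_inc[OF K _ True \<open>p \<le> vv k\<close>] r by simp
    next
      case False
      hence "p \<le> r" by simp
      moreover have "p < r \<Longrightarrow> Rf k p < Rf k r" using Rf_inc[OF K p(1) _ r(2)] by simp
      ultimately show ?thesis using r False by force
    qed
  next
    case False
    hence "Rf k P < Rf k p" using Rf_dec[OF K _ _ order_refl, of p] p by simp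
    thus ?thesis using Rf_P False r by simp
  qed
  thus ?thesis using r r0 rv by (intro exI[of _ r]) auto
qed

lemma r0_props: "0 < r0 k" "r0 k < vv k" "\<And>p. 0 \<le> p \<Longrightarrow> p < P \<Longrightarrow> (Rf k p > 0 \<longleftrightarrow> r0 k < p)"
proof -
  have "0 < r0 k \<and> r0 k < vv k \<and> (\<forall>p. 0 \<le> p \<and> p < P \<longrightarrow> (Rf k p > 0 \<longleftrightarrow> r0 k < p))"
    unfolding r0_def by (rule someI_ex[OF Rf_pos_iff])
  thus "0 < r0 k" "r0 k < vv k" "\<And>p. 0 \<le> p \<Longrightarrow> p < P \<Longrightarrow> (Rf k p > 0 \<longleftrightarrow> r0 k < p)" by auto
qed

lemma Feas_char: "Feas N C sg th Pm eta k kp = {p. r0 k < p \<and> pc \<le> p \<and> p < P}"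
proof (rule set_eqI, rule iffI)
  fix p assume "p \<in> Feas N C sg th Pm eta k kp"
  hence h: "0 \<le> p" "Rev N sg th Pm eta k p > 0" "Apeak N sg th Pm kp p \<le> C" unfolding Feas_def by auto
  have pP: "p < P" using h(2) Rev_out[of p k] h(1) by force
  show "p \<in> {p. r0 k < p \<and> pc \<le> p \<and> p < P}"
    using h pP r0_props(3)[of p] Rev_Rf[of p k] Apeak_le_iff[of p] by auto
next
  fix p assume "p \<in> {p. r0 k < p \<and> pc \<le> p \<and> p < P}"
  hence h: "r0 k < p" "pc \<le> p" "p < P" by auto
  hence "0 \<le> p" using r0_props(1) by simp
  thus "p \<in> Feas N C sg th Pm eta k kp"
    unfolding Feas_def using h r0_props(3)[of p] Rev_Rf[of p k] Apeak_le_iff[of p] by auto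
qed

lemma EqSet_vv:
  assumes pcv: "pc < vv k"
  shows "EqSet N C sg th Pm eta k kp = {vv k}"
proof -
  define r where "r = r0 k"
  have r: "0 < r" "r < vv k"
    "Feas N C sg th Pm eta k kp = {p. r < p \<and> pc \<le> p \<and> p < P}"
    unfolding r_def using r0_props Feas_char by auto
  have v: "0 < vv k" "vv k < P" using vv_bounds[OF K] by auto
  have vF: "vv k \<in> Feas N C sg th Pm eta k kp" unfolding r(3) using r(2) v pcv by simp
  have cmp: "Rev N sg th Pm eta k q < Rev N sg th Pm eta k (vv k)"
    if qF: "q \<in> Feas N C sg th Pm eta k kp" and qv: "q \<noteq> vv k" for q
  proof -
    have q: "r < q" "q < P" using qF unfolding r(3) by auto
    have q0: "0 \<le> q" using q r(1) by simp
    have "Rf k q < Rf k (vv k)"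
    proof (cases "q < vv k")
      case True thus ?thesis using Rf_inc[OF K q0 True order_refl] by simp
    next
      case False hence "vv k < q" using qv by simp
      thus ?thesis using Rf_dec[OF K order_refl _ less_imp_le[OF q(2)]] by simp
    qed
    moreover have "Rev N sg th Pm eta k q = Rf k q" using Rev_Rf[OF q0 q(2)] .
    moreover have "Rev N sg th Pm eta k (vv k) = Rf k (vv k)" using Rev_Rf[OF less_imp_le[OF v(1)] v(2)] .
    ultimately show ?thesis by simp
  qed
  show ?thesis
  proof (rule set_eqI, rule iffI)
    fix p assume "p \<in> EqSet N C sg th Pm eta k kp"
    hence pF: "p \<in> Feas N C sg th Pm eta k kp" and le: "Rev N sg th Pm eta k (vv k) \<le> Rev N sg th Pm eta k p"
      unfolding EqSet_def using vF by blast+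
    have "p = vv k"
    proof (rule ccontr)
      assume "p \<noteq> vv k"
      with cmp[OF pF] le show False by simp
    qed
    thus "p \<in> {vv k}" by simp
  next
    fix p assume "p \<in> {vv k}"
    hence pv: "p = vv k" by simp
    have "\<forall>q \<in> Feas N C sg th Pm eta k kp. Rev N sg th Pm eta k q \<le> Rev N sg th Pm eta k p"
    proof
      fix q assume qF: "q \<in> Feas N C sg th Pm eta k kp"
      show "Rev N sg th Pm eta k q \<le> Rev N sg th Pm eta k p"
        using cmp[OF qF] pv by (cases "q = vv k") auto
    qed
    thus "p \<in> EqSet N C sg th Pm eta k kp"
      unfolding EqSet_def using vF pv by blast
  qed
qed

lemma eq_price_vv: "pc < vv k \<Longrightarrow> eq_price N C sg th Pm eta k kp = vv k"
  unfolding eq_price_def using EqSet_vv by simp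


lemma pmax_P: "pmax th Pm = P" unfolding pmax_def P_def ..

lemma unimodal:
  "\<exists>v. mono_on ({0..<pmax th Pm} \<inter> {..v}) (Rev N sg th Pm eta k)
      \<and> antimono_on ({0..<pmax th Pm} \<inter> {v..}) (Rev N sg th Pm eta k)"
proof (intro exI conjI)
  have v: "0 < vv k" "vv k < P" using vv_bounds[OF K] by auto
  show "mono_on ({0..<pmax th Pm} \<inter> {..vv k}) (Rev N sg th Pm eta k)"
  proof (rule monotone_onI)
    fix x y assume x: "x \<in> {0..<pmax th Pm} \<inter> {..vv k}" and y: "y \<in> {0..<pmax th Pm} \<inter> {..vv k}" and xy: "x \<le> y"
    have x': "0 \<le> x" "x < P" and y': "0 \<le> y" "y < P" "y \<le> vv k" using x y unfolding pmax_P by auto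
    show "Rev N sg th Pm eta k x \<le> Rev N sg th Pm eta k y"
    proof (cases "x = y")
      case False
      hence "x < y" using xy by simp
      hence "Rf k x < Rf k y" using Rf_inc[OF K x'(1) _ y'(3)] by simp
      thus ?thesis using Rev_Rf[OF x'] Rev_Rf[OF y'(1,2)] by simp
    qed simp
  qed
  show "antimono_on ({0..<pmax th Pm} \<inter> {vv k..}) (Rev N sg th Pm eta k)"
  proof (rule monotone_onI)
    fix x y assume x: "x \<in> {0..<pmax th Pm} \<inter> {vv k..}" and y: "y \<in> {0..<pmax th Pm} \<inter> {vv k..}" and xy: "x \<le> y"
    have x': "0 \<le> x" "x < P" "vv k \<le> x" and y': "0 \<le> y" "y < P" using x y unfolding pmax_P by auto
    show "Rev N sg th Pm eta k y \<le> Rev N sg th Pm eta k x"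
    proof (cases "x = y")
      case False
      hence "x < y" using xy by simp
      hence "Rf k y < Rf k x" using Rf_dec[OF K x'(3) _ less_imp_le[OF y'(2)]] by simp
      thus ?thesis using Rev_Rf[OF x'(1,2)] Rev_Rf[OF y'] by simp
    qed simp
  qed
qed

lemma r0_lt_P: "r0 k < P" using r0_props(2) vv_bounds[OF K] by simp

lemma Feas_ne: "Feas N C sg th Pm eta k kp \<noteq> {}"
proof -
  define m where "m = (max (r0 k) pc + P) / 2"
  have "m \<in> Feas N C sg th Pm eta k kp" unfolding Feas_char m_def using r0_lt_P pc_lt_P by auto
  thus ?thesis by blast
qed

lemma Feas_conn: "connected (Feas N C sg th Pm eta k kp)"
  unfolding connected_iff_interval Feas_char by auto

lemma p0_val: "p0 N C sg th Pm eta k kp = max (r0 k) pc"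
proof (cases "pc \<le> r0 k")
  case True
  have "Feas N C sg th Pm eta k kp = {r0 k<..<P}" unfolding Feas_char using True by auto
  thus ?thesis unfolding p0_def using True r0_lt_P by simp
next
  case False
  have "Feas N C sg th Pm eta k kp = {pc..<P}" unfolding Feas_char using False by auto
  thus ?thesis unfolding p0_def using False pc_lt_P by simp
qed

lemma p0_deriv:
  "deriv (Rev N sg th Pm eta k) (p0 N C sg th Pm eta k kp) = Rd k (p0 N C sg th Pm eta k kp)"
proof -
  have "0 < p0 N C sg th Pm eta k kp" "p0 N C sg th Pm eta k kp < P"
    unfolding p0_val using r0_props(1) r0_lt_P pc_lt_P by auto
  thus ?thesis by (intro DERIV_imp_deriv Rev_deriv)
qed

lemma part_ii:
  assumes "deriv (Rev N sg th Pm eta k) (p0 N C sg th Pm eta k kp) < 0"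
  shows "EqSet N C sg th Pm eta k kp = {p0 N C sg th Pm eta k kp}
          \<and> Apeak N sg th Pm kp (p0 N C sg th Pm eta k kp) = C
          \<and> p0 N C sg th Pm eta k kp =
              Pm powr th * (1 - C / (kp * N * ((1 - sg) / (2 - sg) * Pm))) powr (th / (2 - sg))"
proof -
  let ?p = "p0 N C sg th Pm eta k kp"
  have pp: "0 < ?p" "?p < P" unfolding p0_val using r0_props(1) r0_lt_P pc_lt_P by auto
  have "Rd k ?p < 0" using assms p0_deriv by simp
  hence vp: "vv k < ?p" using Rd_sign(2)[OF K pp] by simp
  have rpc: "r0 k < pc"
  proof (rule ccontr)
    assume "\<not> r0 k < pc"
    hence "?p = r0 k" unfolding p0_val by simp
    thus False using vp r0_props(2) by simp
  qed
  have ppc: "?p = pc" unfolding p0_val using rpc by simp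
  have CM: "C < M"
  proof (rule ccontr)
    assume "\<not> C < M" hence "pc = 0" unfolding pc_def by simp
    thus False using rpc r0_props(1) by simp
  qed
  have F: "Feas N C sg th Pm eta k kp = {pc..<P}" unfolding Feas_char using rpc by auto
  have vpc: "vv k < pc" using vp ppc by simp
  have cmp: "Rev N sg th Pm eta k q < Rev N sg th Pm eta k pc" if "pc < q" "q < P" for q
  proof -
    have "Rf k q < Rf k pc" using Rf_dec[OF K less_imp_le[OF vpc] that(1) less_imp_le[OF that(2)]] .
    thus ?thesis using Rev_Rf[of q k] Rev_Rf[of pc k] that pc_ge0 pc_lt_P by simp
  qed
  have E1: "EqSet N C sg th Pm eta k kp = {pc}"
  proof (rule set_eqI, rule iffI)
    fix p assume "p \<in> EqSet N C sg th Pm eta k kp"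
    hence pF: "pc \<le> p" "p < P" and le: "Rev N sg th Pm eta k pc \<le> Rev N sg th Pm eta k p"
      unfolding EqSet_def F using pc_lt_P by auto
    have "p = pc"
    proof (rule ccontr)
      assume "p \<noteq> pc" hence "pc < p" using pF by simp
      thus False using cmp[OF _ pF(2)] le by force
    qed
    thus "p \<in> {pc}" by simp
  next
    fix p assume "p \<in> {pc}"
    hence pv: "p = pc" by simp
    have "\<forall>q \<in> {pc..<P}. Rev N sg th Pm eta k q \<le> Rev N sg th Pm eta k p"
    proof
      fix q assume q: "q \<in> {pc..<P}"
      show "Rev N sg th Pm eta k q \<le> Rev N sg th Pm eta k p"
        using cmp[of q] q pv by (cases "q = pc") auto
    qed
    thus "p \<in> EqSet N C sg th Pm eta k kp"
      unfolding EqSet_def F using pv pc_lt_P by auto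
  qed
  have form: "pc = Pm powr th * (1 - C / (kp * N * ((1 - sg) / (2 - sg) * Pm))) powr (th / (2 - sg))"
    unfolding pc_def M_def E_def P_def be_def using CM unfolding M_def E_def by simp
  show ?thesis using E1 ppc Apeak_pc[OF CM] form by simp
qed

lemma part_iii:
  assumes "deriv (Rev N sg th Pm eta k) (p0 N C sg th Pm eta k kp) > 0"
  shows "pc < vv k" "\<exists>ps. EqSet N C sg th Pm eta k kp = {ps}
             \<and> Apeak N sg th Pm kp ps \<noteq> C
             \<and> 0 < ps \<and> ps < pmax th Pm
             \<and> deriv (Rev N sg th Pm eta k) ps = 0
             \<and> (\<forall>p. 0 < p \<and> p < pmax th Pm \<and> deriv (Rev N sg th Pm eta k) p = 0 \<longrightarrow> p = ps)"
proof -
  let ?p = "p0 N C sg th Pm eta k kp"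
  have pp: "0 < ?p" "?p < P" unfolding p0_val using r0_props(1) r0_lt_P pc_lt_P by auto
  have "Rd k ?p > 0" using assms p0_deriv by simp
  hence vp: "?p < vv k" using Rd_sign(1)[OF K pp] by simp
  thus pcv: "pc < vv k" unfolding p0_val by simp
  have v: "0 < vv k" "vv k < P" using vv_bounds[OF K] by auto
  show "\<exists>ps. EqSet N C sg th Pm eta k kp = {ps}
             \<and> Apeak N sg th Pm kp ps \<noteq> C
             \<and> 0 < ps \<and> ps < pmax th Pm
             \<and> deriv (Rev N sg th Pm eta k) ps = 0
             \<and> (\<forall>p. 0 < p \<and> p < pmax th Pm \<and> deriv (Rev N sg th Pm eta k) p = 0 \<longrightarrow> p = ps)"
  proof (intro exI conjI allI impI)
    show "EqSet N C sg th Pm eta k kp = {vv k}" using EqSet_vv[OF pcv] .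
    show "Apeak N sg th Pm kp (vv k) \<noteq> C" using Apeak_lt[OF less_imp_le[OF v(1)] less_imp_le[OF v(2)] pcv] by simp
    show "0 < vv k" "vv k < pmax th Pm" using v pmax_P by auto
    show "deriv (Rev N sg th Pm eta k) (vv k) = 0"
      using DERIV_imp_deriv[OF Rev_deriv[OF v, of k]] Rd_sign(3)[OF K v] by simp
    fix p assume h: "0 < p \<and> p < pmax th Pm \<and> deriv (Rev N sg th Pm eta k) p = 0"
    hence p: "0 < p" "p < P" using pmax_P by auto
    have "Rd k p = 0" using h DERIV_imp_deriv[OF Rev_deriv[OF p, of k]] by simp
    thus "p = vv k" using Rd_sign(3)[OF K p] by simp
  qed
qed

end


lemma mk_K: "0 < k \<Longrightarrow> eta < 1 / (k * Pm powr (1 - th)) \<Longrightarrow> k*K1 < al"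
proof -
  assume k: "0 < k" and e: "eta < 1 / (k * Pm powr (1 - th))"
  have "eta * (k * Pm powr (1 - th)) < 1" using e k Pm_pos by (simp add: field_simps)
  hence "(eta * k * Pm powr (1 - th)) * ((1-sg)/th) < 1 * ((1-sg)/th)"
    using sg1 th0 by (intro mult_strict_right_mono) (auto simp: algebra_simps)
  thus "k*K1 < al" unfolding K1_def al_def by (simp add: field_simps)
qed

lemma eq_deriv:
  assumes k0: "0 < ka" and K: "ka*K1 < al" and pcv: "pc < vv ka"
  shows "\<exists>D > 0. ((\<lambda>k. eq_price N C sg th Pm eta k kp) has_real_derivative D) (at ka within {0<..1})"
proof -
  define w where "w = wst (ka*K1)"
  have w1: "1 < w" unfolding w_def using wst(1)[OF K] .
  define Dw where "Dw = inverse (1 + al - rho * w powr (rho - 1))"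
  have Dw: "Dw < 0" unfolding Dw_def w_def using wst(5)[OF K] by simp
  have dw: "(wst has_real_derivative Dw) (at (ka*K1))" unfolding Dw_def w_def using wst_deriv[OF K] .
  have dlin: "((\<lambda>k. k*K1) has_real_derivative K1) (at ka)"
    using DERIV_cmult_right[OF DERIV_ident[of "at ka"], of K1] by simp
  have d1: "((\<lambda>k. wst (k*K1)) has_real_derivative Dw * K1) (at ka)"
    using DERIV_chain2[OF dw dlin] .
  have d2: "((\<lambda>k. wst (k*K1) powr (-1/ga)) has_real_derivative ((-1/ga) * w powr (-1/ga - 1)) * (Dw * K1)) (at ka)"
    using DERIV_chain2[OF has_real_derivative_powr[of "wst (ka*K1)" "-1/ga"] d1] w1 unfolding w_def by simp
  define D where "D = P * (((-1/ga) * w powr (-1/ga - 1)) * (Dw * K1))"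
  have dv: "(vv has_real_derivative D) (at ka)"
  proof -
    have "((\<lambda>k. P * wst (k*K1) powr (-1/ga)) has_real_derivative D) (at ka)"
      unfolding D_def by (rule DERIV_cmult[OF d2])
    moreover have "vv = (\<lambda>k. P * wst (k*K1) powr (-1/ga))" by (rule ext) (simp add: vv_def)
    ultimately show ?thesis by simp
  qed
  have Dpos: "D > 0"
  proof -
    have a: "(-1/ga) * w powr (-1/ga - 1) < 0" using ga_pos w1 by (simp add: mult_neg_pos)
    have b: "Dw * K1 < 0" using Dw K1_pos by (simp add: mult_neg_pos)
    have "((-1/ga) * w powr (-1/ga - 1)) * (Dw * K1) > 0" using mult_neg_neg[OF a b] .
    thus ?thesis unfolding D_def using P_pos by (rule mult_pos_pos[rotated])
  qed
  have ev1: "eventually (\<lambda>k. 0 < k) (at ka)"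
    using order_tendstoD(1)[OF tendsto_ident_at k0] .
  have "((\<lambda>k. k*K1) \<longlongrightarrow> ka*K1) (at ka)" by (intro tendsto_intros)
  hence ev2: "eventually (\<lambda>k. k*K1 < al) (at ka)" using order_tendstoD(2) K by blast
  have "(vv \<longlongrightarrow> vv ka) (at ka)" using DERIV_isCont[OF dv] by (simp add: isCont_def)
  hence ev3: "eventually (\<lambda>k. pc < vv k) (at ka)" using order_tendstoD(1) pcv by blast
  have ev: "eventually (\<lambda>k. vv k = eq_price N C sg th Pm eta k kp) (at ka)"
    using ev1 ev2 ev3
  proof eventually_elim
    case (elim k) thus ?case using eq_price_vv[of k] by simp
  qed
  have "eventually (\<lambda>k. vv k = eq_price N C sg th Pm eta k kp) (nhds ka)"
    unfolding eventually_nhds_conv_at using ev eq_price_vv[OF k0 K pcv] by simp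
  hence "((\<lambda>k. eq_price N C sg th Pm eta k kp) has_real_derivative D) (at ka)"
    using DERIV_cong_ev[OF refl _ refl, of vv "\<lambda>k. eq_price N C sg th Pm eta k kp" ka D] dv by simp
  hence "((\<lambda>k. eq_price N C sg th Pm eta k kp) has_real_derivative D) (at ka within {0<..1})"
    by (rule has_field_derivative_at_within)
  thus ?thesis using Dpos by blast
qed

end

theorem proposition1:
  fixes N C Pm sg th eta ka kp :: real
  assumes N_pos: "N > 0" and C_pos: "C > 0" and Pm_pos: "Pm > 0"
    and sg: "0 < sg" "sg < 1" and th: "0 < th" "th < 1"
    and eta_pos: "eta > 0"
    and ka: "0 < ka" "ka \<le> 1" and kp: "0 < kp" "kp \<le> 1"
    and eta_bound: "eta < 1 / (ka * Pm powr (1 - th))"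
  shows
    "(\<exists>v. mono_on ({0..<pmax th Pm} \<inter> {..v}) (Rev N sg th Pm eta ka)
          \<and> antimono_on ({0..<pmax th Pm} \<inter> {v..}) (Rev N sg th Pm eta ka))
     \<and> Feas N C sg th Pm eta ka kp \<noteq> {}
     \<and> connected (Feas N C sg th Pm eta ka kp)
     \<and> (deriv (Rev N sg th Pm eta ka) (p0 N C sg th Pm eta ka kp) < 0 \<longrightarrow>
          EqSet N C sg th Pm eta ka kp = {p0 N C sg th Pm eta ka kp}
          \<and> Apeak N sg th Pm kp (p0 N C sg th Pm eta ka kp) = C
          \<and> p0 N C sg th Pm eta ka kp =
              Pm powr th * (1 - C / (kp * N * ((1 - sg) / (2 - sg) * Pm))) powr (th / (2 - sg)))
     \<and> (deriv (Rev N sg th Pm eta ka) (p0 N C sg th Pm eta ka kp) > 0 \<longrightarrow>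
          (\<exists>ps. EqSet N C sg th Pm eta ka kp = {ps}
             \<and> Apeak N sg th Pm kp ps \<noteq> C
             \<and> 0 < ps \<and> ps < pmax th Pm
             \<and> deriv (Rev N sg th Pm eta ka) ps = 0
             \<and> (\<forall>p. 0 < p \<and> p < pmax th Pm \<and> deriv (Rev N sg th Pm eta ka) p = 0 \<longrightarrow> p = ps))
          \<and> (\<exists>D > 0. ((\<lambda>k. eq_price N C sg th Pm eta k kp) has_real_derivative D)
                       (at ka within {0<..1})))"
proof -
  interpret base N C Pm sg th eta kp
    by unfold_locales (use assms in auto)
  have K: "ka*K1 < al" using mk_K[OF ka(1) eta_bound] .
  show ?thesis
    using unimodal[OF ka(1) K] Feas_ne[OF ka(1) K] Feas_conn[OF ka(1) K] part_ii[OF ka(1) K]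
      part_iii[OF ka(1) K] eq_deriv[OF ka(1) K]
    by blast
qed

end
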